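(* For the sum-throughput maximization problem described in the context, there exist optimal average transmit powers $(\mathbf{p}_1^*,\mathbf{p}_2^*,\mathbf{p}_3^* )$ that do not yield a battery overflow at any of the nodes $T_1,T_2,T_3$ throughout the communication session, i.e., they satisfy $\sum_{i=1}^{n} E_{j,i} - \sum_{i=1}^{n-1} l_i p^*_{j,i} \leq E_{j,max}$ for all $j=1,2,3$ and $n=1,\dots,N$.
   Context: Consider an AWGN two-way relay channel in which two source nodes $T_1$ and $T_2$ exchange independent messages only through a relay node $T_3$ (no direct link), with reciprocal channel power gains $h_{13}$ (between $T_1$ and $T_3$) and $h_{23}$ (between $T_2$ and $T_3$); the relay has no data buffer. All three nodes are energy harvesting: node $T_j$, $j=1,2,3$, harvests $E_{j,n}\geq 0$ units of energy at time $s_n$ (with $s_1=0$ and $E_{j,1}$ the initial battery charge) and stores it in a battery of capacity $E_{j,max}$; energy in excess of the capacity is lost. Epoch $n$ is the interval of length $l_n=s_{n+1}-s_n$, and the session consists of $N$ epochs. In epoch $n$ node $T_j$ uses average transmit power $p_{j,n}$, subject to $p_{j,n}\le B_{j,n}/l_n$ where the battery state evolves as $B_{j,n+1}=\min\{E_{j,max},B_{j,n}-l_np_{j,n}+E_{j,n+1}\}$. The energy harvesting profile is known non-causally (offline). A power policy is $\mathbf{p}_j=(p_{j,1},\dots,p_{j,N})$, $j=1,2,3$ (plus multiple-access phase fractions $\Delta_n\in[0,1]$ for half-duplex nodes), and the goal is to maximize the sum-throughput $\sum_{n=1}^N l_n(R_{1,n}+R_{2,n})$, where in each epoch the rate pair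 $(R_{1,n},R_{2,n})$ must lie in the achievable region $\mathcal{R}_{FD}(p_{1,n},p_{2,n},p_{3,n})$ (full-duplex) or $\mathcal{R}_{HD}(p_{1,n},p_{2,n},p_{3,n},\Delta_n)$ (half-duplex) of the chosen relaying scheme (decode-and-forward, compress-and-forward, amplify-and-forward, compute-and-forward, or a hybrid of these), taken in its concavified form, i.e., including all time-sharing combinations within an epoch with the given average powers. A battery overflow at node $T_j$ at the end of epoch $n$ means $\sum_{i=1}^{n} E_{j,i} - \sum_{i=1}^{n-1} l_i p_{j,i} - E_{j,max} > 0$. *)

theory Defs
  imports Complex_Main
begin

text \<open>E j n : energy harvested by node j at time s_n (E j 1 = initial charge),
  Emax j : battery capacity of node j, l n : length of epoch n,
  p j n : average transmit power of node j in epoch n.\<close>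

text \<open>Battery level of node j at the start of epoch (k+1):
  B_1 = min Emax E_1,  B_(n+1) = min Emax (B_n - l_n p_n + E_(n+1)).\<close>
fun batt :: "(nat \<Rightarrow> real) \<Rightarrow> real \<Rightarrow> (nat \<Rightarrow> real) \<Rightarrow> (nat \<Rightarrow> real) \<Rightarrow> nat \<Rightarrow> real" where
  "batt E Emax l p 0 = min Emax (E 1)"
| "batt E Emax l p (Suc k) =
     min Emax (batt E Emax l p k - l (Suc k) * p (Suc k) + E (Suc (Suc k)))"

text \<open>Feasible policy: powers p, MAC phase fractions D, rates R1 R2, for the
  (concavified) achievable region Reg p1 p2 p3 D (for full duplex Reg ignores D).\<close>
definition feasible ::
  "nat \<Rightarrow> (nat \<Rightarrow> real) \<Rightarrow> (nat \<Rightarrow> nat \<Rightarrow> real) \<Rightarrow> (nat \<Rightarrow> real)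
   \<Rightarrow> (real \<Rightarrow> real \<Rightarrow> real \<Rightarrow> real \<Rightarrow> (real \<times> real) set)
   \<Rightarrow> (nat \<Rightarrow> nat \<Rightarrow> real) \<Rightarrow> (nat \<Rightarrow> real) \<Rightarrow> (nat \<Rightarrow> real) \<Rightarrow> (nat \<Rightarrow> real) \<Rightarrow> bool"
  where
  "feasible N l E Emax Reg p D R1 R2 \<longleftrightarrow>
     (\<forall>n\<in>{1..N}.
        (\<forall>j\<in>{1,2,3::nat}. 0 \<le> p j n \<and> p j n \<le> batt (E j) (Emax j) l (p j) (n - 1) / l n)
      \<and> 0 \<le> D n \<and> D n \<le> 1
      \<and> (R1 n, R2 n) \<in> Reg (p 1 n) (p 2 n) (p 3 n) (D n))"

definition throughput :: "nat \<Rightarrow> (nat \<Rightarrow> real) \<Rightarrow> (nat \<Rightarrow> real) \<Rightarrow> (nat \<Rightarrow> real) \<Rightarrow> real" where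
  "throughput N l R1 R2 = (\<Sum>n=1..N. l n * (R1 n + R2 n))"

definition optimal where
  "optimal N l E Emax Reg p D R1 R2 \<longleftrightarrow>
     feasible N l E Emax Reg p D R1 R2 \<and>
     (\<forall>p' D' R1' R2'. feasible N l E Emax Reg p' D' R1' R2' \<longrightarrow>
        throughput N l R1' R2' \<le> throughput N l R1 R2)"

definition no_overflow :: "nat \<Rightarrow> (nat \<Rightarrow> real) \<Rightarrow> (nat \<Rightarrow> real) \<Rightarrow> real \<Rightarrow> (nat \<Rightarrow> real) \<Rightarrow> bool" where
  "no_overflow N l Ej Emaxj pj \<longleftrightarrow>
     (\<forall>n\<in>{1..N}. (\<Sum>i=1..n. Ej i) - (\<Sum>i=1..n-1. l i * pj i) \<le> Emaxj)"

end

theory Submission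
  imports Defs
begin

definition stp :: "nat \<Rightarrow> (nat \<Rightarrow> real) \<Rightarrow> (nat \<Rightarrow> real) \<Rightarrow> real \<Rightarrow> (nat \<Rightarrow> real) \<Rightarrow> real \<Rightarrow> nat \<Rightarrow> real" where
  "stp N l e M pp b k = (if k < N then max (pp k) ((b + e (Suc k) - M) / l k) else pp k)"

fun bb :: "nat \<Rightarrow> (nat \<Rightarrow> real) \<Rightarrow> (nat \<Rightarrow> real) \<Rightarrow> real \<Rightarrow> (nat \<Rightarrow> real) \<Rightarrow> nat \<Rightarrow> real" where
  "bb N l e M pp 0 = min M (e 1)"
| "bb N l e M pp (Suc k) = bb N l e M pp k - l (Suc k) * stp N l e M pp (bb N l e M pp k) (Suc k) + e (Suc (Suc k))"

definition qq :: "nat \<Rightarrow> (nat \<Rightarrow> real) \<Rightarrow> (nat \<Rightarrow> real) \<Rightarrow> real \<Rightarrow> (nat \<Rightarrow> real) \<Rightarrow> nat \<Rightarrow> real" where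
  "qq N l e M pp k = (if k = 0 then pp 0 else stp N l e M pp (bb N l e M pp (k - 1)) k)"

lemma qq_Suc: "qq N l e M pp (Suc k) = stp N l e M pp (bb N l e M pp k) (Suc k)"
  by (simp add: qq_def)

lemma main_inv:
  assumes lpos: "\<And>n. n \<in> {1..N} \<Longrightarrow> 0 < l n"
    and ecap: "\<And>n. n \<in> {1..N} \<Longrightarrow> e n \<le> M"
    and ppfeas: "\<And>n. n \<in> {1..N} \<Longrightarrow> pp n \<le> batt e M l pp (n - 1) / l n"
    and k: "k < N"
  shows "batt e M l (qq N l e M pp) k = bb N l e M pp k \<and> batt e M l pp k \<le> bb N l e M pp k
     \<and> bb N l e M pp k \<le> M
     \<and> bb N l e M pp k = (\<Sum>i=1..Suc k. e i) - (\<Sum>i=1..k. l i * qq N l e M pp i)"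
  using k
proof (induction k)
  case 0
  have "e 1 \<le> M" using ecap 0 by auto
  then show ?case by simp
next
  case (Suc k)
  let ?b = "bb N l e M pp k"
  have IH: "batt e M l (qq N l e M pp) k = ?b" "batt e M l pp k \<le> ?b" "?b \<le> M"
     "?b = (\<Sum>i=1..Suc k. e i) - (\<Sum>i=1..k. l i * qq N l e M pp i)"
    using Suc by auto
  have lp: "0 < l (Suc k)" using lpos Suc.prems by auto
  have st: "stp N l e M pp ?b (Suc k) = max (pp (Suc k)) ((?b + e (Suc (Suc k)) - M) / l (Suc k))"
    using Suc.prems by (simp add: stp_def)
  have "l (Suc k) * max (pp (Suc k)) ((?b + e (Suc (Suc k)) - M) / l (Suc k))
        \<ge> l (Suc k) * ((?b + e (Suc (Suc k)) - M) / l (Suc k))"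
    using lp by (intro mult_left_mono) auto
  also have "l (Suc k) * ((?b + e (Suc (Suc k)) - M) / l (Suc k)) = ?b + e (Suc (Suc k)) - M"
    using lp by simp
  finally have le1: "bb N l e M pp (Suc k) \<le> M" using st by simp
  have b1: "batt e M l (qq N l e M pp) (Suc k) = bb N l e M pp (Suc k)"
    using le1 IH(1) st by (simp add: qq_Suc)
  have b2: "batt e M l pp (Suc k) \<le> bb N l e M pp (Suc k)"
  proof (cases "pp (Suc k) \<ge> (?b + e (Suc (Suc k)) - M) / l (Suc k)")
    case True
    then have "stp N l e M pp ?b (Suc k) = pp (Suc k)" using st by simp
    then show ?thesis using IH(2) by simp
  next
    case False
    then have "stp N l e M pp ?b (Suc k) = (?b + e (Suc (Suc k)) - M) / l (Suc k)" using st by simp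
    then have "bb N l e M pp (Suc k) = M" using lp by simp
    then show ?thesis by simp
  qed
  have b3: "bb N l e M pp (Suc k) = (\<Sum>i=1..Suc (Suc k). e i) - (\<Sum>i=1..Suc k. l i * qq N l e M pp i)"
    using IH(4) by (simp add: qq_Suc)
  show ?case using b1 b2 b3 le1 by simp
qed

lemma node_ok:
  assumes lpos: "\<And>n. n \<in> {1..N} \<Longrightarrow> 0 < l n"
    and ecap: "\<And>n. n \<in> {1..N} \<Longrightarrow> e n \<le> M"
    and ppfeas: "\<And>n. n \<in> {1..N} \<Longrightarrow> pp n \<le> batt e M l pp (n - 1) / l n"
    and ppnn: "\<And>n. n \<in> {1..N} \<Longrightarrow> 0 \<le> pp n"
  shows "\<And>n. n \<in> {1..N} \<Longrightarrow> 0 \<le> qq N l e M pp n \<and> pp n \<le> qq N l e M pp n \<and>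
           qq N l e M pp n \<le> batt e M l (qq N l e M pp) (n - 1) / l n"
    and "no_overflow N l e M (qq N l e M pp)"
proof -
  fix n assume n: "n \<in> {1..N}"
  then obtain k where nk: "n = Suc k" and kN: "k < N" by (metis Suc_le_eq atLeastAtMost_iff not0_implies_Suc not_one_le_zero)
  note I = main_inv[OF lpos ecap ppfeas kN]
  have lp: "0 < l n" using lpos n by auto
  have q: "qq N l e M pp n = stp N l e M pp (bb N l e M pp k) n" using nk qq_Suc by simp
  have ge: "pp n \<le> qq N l e M pp n" unfolding q stp_def by auto
  have pple: "pp n \<le> bb N l e M pp k / l n"
  proof -
    have "batt e M l pp (n - 1) / l n \<le> bb N l e M pp k / l n"
      using I nk lp by (intro divide_right_mono) auto
    then show ?thesis using ppfeas[OF n] by linarith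
  qed
  have "qq N l e M pp n \<le> bb N l e M pp k / l n"
  proof (cases "n < N")
    case True
    have "e (Suc n) \<le> M" using ecap True by auto
    then have "(bb N l e M pp k + e (Suc n) - M) / l n \<le> bb N l e M pp k / l n"
      using lp by (intro divide_right_mono) auto
    then show ?thesis unfolding q stp_def using pple True by simp
  next
    case False
    then show ?thesis unfolding q stp_def using pple by simp
  qed
  then show "0 \<le> qq N l e M pp n \<and> pp n \<le> qq N l e M pp n \<and>
           qq N l e M pp n \<le> batt e M l (qq N l e M pp) (n - 1) / l n"
    using ge ppnn[OF n] I nk by simp
next
  show "no_overflow N l e M (qq N l e M pp)"
    unfolding no_overflow_def
  proof
    fix n assume n: "n \<in> {1..N}"
    then obtain k where nk: "n = Suc k" and kN: "k < N" by (metis Suc_le_eq atLeastAtMost_iff not0_implies_Suc not_one_le_zero)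
    note I = main_inv[OF lpos ecap ppfeas kN]
    then show "(\<Sum>i = 1..n. e i) - (\<Sum>i = 1..n - 1. l i * qq N l e M pp i) \<le> M"
      using nk by simp
  qed
qed

theorem proposition1:
  fixes N :: nat
    and l :: "nat \<Rightarrow> real"
    and E :: "nat \<Rightarrow> nat \<Rightarrow> real"
    and Emax :: "nat \<Rightarrow> real"
    and Reg :: "real \<Rightarrow> real \<Rightarrow> real \<Rightarrow> real \<Rightarrow> (real \<times> real) set"
  assumes l_pos: "\<And>n. n \<in> {1..N} \<Longrightarrow> 0 < l n"
    and E_nonneg: "\<And>j n. j \<in> {1,2,3} \<Longrightarrow> n \<in> {1..N} \<Longrightarrow> 0 \<le> E j n"
    and E_le_cap: "\<And>j n. j \<in> {1,2,3} \<Longrightarrow> n \<in> {1..N} \<Longrightarrow> E j n \<le> Emax j"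
    and Reg_mono: "\<And>a1 a2 a3 b1 b2 b3 d. 0 \<le> a1 \<Longrightarrow> 0 \<le> a2 \<Longrightarrow> 0 \<le> a3 \<Longrightarrow>
        a1 \<le> b1 \<Longrightarrow> a2 \<le> b2 \<Longrightarrow> a3 \<le> b3 \<Longrightarrow> 0 \<le> d \<Longrightarrow> d \<le> 1 \<Longrightarrow>
        Reg a1 a2 a3 d \<subseteq> Reg b1 b2 b3 d"
    and Reg_concave: "\<And>a1 a2 a3 b1 b2 b3 d r1 r2 s1 s2 (t::real). 0 \<le> t \<Longrightarrow> t \<le> 1 \<Longrightarrow>
        (r1, r2) \<in> Reg a1 a2 a3 d \<Longrightarrow> (s1, s2) \<in> Reg b1 b2 b3 d \<Longrightarrow>
        (t * r1 + (1 - t) * s1, t * r2 + (1 - t) * s2) \<in>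
          Reg (t * a1 + (1 - t) * b1) (t * a2 + (1 - t) * b2) (t * a3 + (1 - t) * b3) d"
    and has_opt: "\<exists>p D R1 R2. optimal N l E Emax Reg p D R1 R2"
  shows "\<exists>p D R1 R2. optimal N l E Emax Reg p D R1 R2 \<and>
           (\<forall>j\<in>{1,2,3}. no_overflow N l (E j) (Emax j) (p j))"
proof -
  obtain p D R1 R2 where opt: "optimal N l E Emax Reg p D R1 R2" using has_opt by blast
  have fe: "feasible N l E Emax Reg p D R1 R2" using opt by (simp add: optimal_def)
  define p' where "p' = (\<lambda>j. qq N l (E j) (Emax j) (p j))"
  have nd: "\<And>n. n \<in> {1..N} \<Longrightarrow> 0 \<le> p' j n \<and> p j n \<le> p' j n \<and>
           p' j n \<le> batt (E j) (Emax j) l (p' j) (n - 1) / l n"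
    and no: "no_overflow N l (E j) (Emax j) (p' j)" if j: "j \<in> {1,2,3}" for j
  proof -
    have a1: "\<And>n. n \<in> {1..N} \<Longrightarrow> E j n \<le> Emax j" using E_le_cap j by blast
    have a2: "\<And>n. n \<in> {1..N} \<Longrightarrow> p j n \<le> batt (E j) (Emax j) l (p j) (n - 1) / l n"
      using fe j unfolding feasible_def by blast
    have a3: "\<And>n. n \<in> {1..N} \<Longrightarrow> 0 \<le> p j n"
      using fe j unfolding feasible_def by blast
    note R = node_ok[OF l_pos a1 a2 a3]
    show "\<And>n. n \<in> {1..N} \<Longrightarrow> 0 \<le> p' j n \<and> p j n \<le> p' j n \<and>
           p' j n \<le> batt (E j) (Emax j) l (p' j) (n - 1) / l n"
      using R(1) unfolding p'_def by blast
    show "no_overflow N l (E j) (Emax j) (p' j)" using R(2) unfolding p'_def by blast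
  qed
  have fe': "feasible N l E Emax Reg p' D R1 R2"
    unfolding feasible_def
  proof
    fix n assume n: "n \<in> {1..N}"
    have f: "(\<forall>j\<in>{1,2,3::nat}. 0 \<le> p j n \<and> p j n \<le> batt (E j) (Emax j) l (p j) (n - 1) / l n)
      \<and> 0 \<le> D n \<and> D n \<le> 1 \<and> (R1 n, R2 n) \<in> Reg (p 1 n) (p 2 n) (p 3 n) (D n)"
      using fe n unfolding feasible_def by blast
    have "Reg (p 1 n) (p 2 n) (p 3 n) (D n) \<subseteq> Reg (p' 1 n) (p' 2 n) (p' 3 n) (D n)"
      apply (rule Reg_mono)
      using f nd[OF _ n] by auto
    then show "(\<forall>j\<in>{1,2,3::nat}. 0 \<le> p' j n \<and> p' j n \<le> batt (E j) (Emax j) l (p' j) (n - 1) / l n)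
      \<and> 0 \<le> D n \<and> D n \<le> 1 \<and> (R1 n, R2 n) \<in> Reg (p' 1 n) (p' 2 n) (p' 3 n) (D n)"
      using f nd[OF _ n] by blast
  qed
  have "optimal N l E Emax Reg p' D R1 R2"
    using opt fe' unfolding optimal_def by blast
  then show ?thesis using no by blast
qed

end
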